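(* In any commitment scheme with non-colluding bidders as described in the context, for every $\ell\in\mathcal{L}$, $(A_\ell,S_\ell)-(M_\ell,X_\ell^n)-(Y^n,S'_\ell)$ forms a Markov chain.
   Context: Setting: $L$ bidders $\mathcal{L}=\{1,\dots,L\}$ and one verifier connected by a discrete memoryless multiple-access channel $p_{Y|X_{\mathcal{L}}}$ with finite alphabets, plus a noiseless channel. Bidder $\ell$ has a random message $A_\ell$ and private local randomness $S_\ell$; the verifier has local randomness $S'_\ell$ for each $\ell$; all messages and local randomness variables are mutually independent. For $i=1,\dots,n$, bidder $\ell$ sends channel input $X_{\ell,i}$ as a function of $(A_\ell,S_\ell)$ and the verifier messages to it received so far; then $r_i$ rounds of noiseless communication follow: in round $j$ bidder $\ell$ sends $M_{\ell,i,j}$ as a function of $(A_\ell,S_\ell)$ and the previous verifier messages $M'_{\ell,1:i,1:j-1}$, and the verifier replies $M'_{\ell,i,j}$ as a function of $(S'_\ell, M_{\ell,1:i,1:j}, Y^i)$ where $Y^i=(Y_1,\dots,Y_i)$ are the channel outputs so far. $M_\ell$ denotes the entire noiseless exchange (both directions) between bidder $\ell$ and the verifier, and $X_\ell^n=(X_{\ell,1},\dots,X_{\ell,n})$. *)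

theory Defs
  imports "HOL-Probability.Probability"
begin

definition markov_chain :: "('a \<times> 'b \<times> 'c) pmf \<Rightarrow> bool" where
  "markov_chain p \<longleftrightarrow>
     (\<forall>x y z. pmf p (x, y, z) * pmf (map_pmf (\<lambda>(x, y, z). y) p) y
              = pmf (map_pmf (\<lambda>(x, y, z). (x, y)) p) (x, y) * pmf (map_pmf (\<lambda>(x, y, z). (y, z)) p) (y, z))"

text \<open>Noiseless exchange in block i between bidder l and the verifier, k rounds.
  State: (flattened list of bidder messages so far, flattened list of verifier messages so far).
  bid l i j a s hv : bidder message M_{l,i,j} from (A_l,S_l) and previous verifier messages.
  ver l i j t hb ys : verifier reply M'_{l,i,j} from S'_l, bidder messages M_{l,1:i,1:j}, Y^i.\<close>
fun exch_rounds ::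
  "('l \<Rightarrow> nat \<Rightarrow> nat \<Rightarrow> 'a \<Rightarrow> 's \<Rightarrow> 'mv list \<Rightarrow> 'mb)
   \<Rightarrow> ('l \<Rightarrow> nat \<Rightarrow> nat \<Rightarrow> 't \<Rightarrow> 'mb list \<Rightarrow> 'y list \<Rightarrow> 'mv)
   \<Rightarrow> 'l \<Rightarrow> nat \<Rightarrow> 'a \<Rightarrow> 's \<Rightarrow> 't \<Rightarrow> 'y list \<Rightarrow> nat
   \<Rightarrow> 'mb list \<times> 'mv list \<Rightarrow> 'mb list \<times> 'mv list" where
  "exch_rounds bid ver l i a s t ys 0 h = h"
| "exch_rounds bid ver l i a s t ys (Suc k) h =
     (case exch_rounds bid ver l i a s t ys k h of (hb, hv) \<Rightarrow>
        (let hb' = hb @ [bid l i (Suc k) a s hv]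
         in (hb', hv @ [ver l i (Suc k) t hb' ys])))"

text \<open>Transcript of bidder l after i channel uses: (X_l^i, bidder messages, verifier messages).
  enc l i a s hv : channel input X_{l,i} from (A_l,S_l) and the verifier messages received so far.
  r i : number of noiseless rounds after channel use i. ys: channel outputs (at least i of them).\<close>
fun bidder_trace ::
  "('l \<Rightarrow> nat \<Rightarrow> 'a \<Rightarrow> 's \<Rightarrow> 'mv list \<Rightarrow> 'x)
   \<Rightarrow> ('l \<Rightarrow> nat \<Rightarrow> nat \<Rightarrow> 'a \<Rightarrow> 's \<Rightarrow> 'mv list \<Rightarrow> 'mb)
   \<Rightarrow> ('l \<Rightarrow> nat \<Rightarrow> nat \<Rightarrow> 't \<Rightarrow> 'mb list \<Rightarrow> 'y list \<Rightarrow> 'mv)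
   \<Rightarrow> (nat \<Rightarrow> nat) \<Rightarrow> 'l \<Rightarrow> 'a \<Rightarrow> 's \<Rightarrow> 't \<Rightarrow> 'y list \<Rightarrow> nat
   \<Rightarrow> 'x list \<times> 'mb list \<times> 'mv list" where
  "bidder_trace enc bid ver r l a s t ys 0 = ([], [], [])"
| "bidder_trace enc bid ver r l a s t ys (Suc i) =
     (case bidder_trace enc bid ver r l a s t ys i of (xs, hb, hv) \<Rightarrow>
        (case exch_rounds bid ver l (Suc i) a s t (take (Suc i) ys) (r (Suc i)) (hb, hv) of
           (hb', hv') \<Rightarrow> (xs @ [enc l (Suc i) a s hv], hb', hv')))"

primrec channel_outputs ::
  "(('l \<Rightarrow> 'x) \<Rightarrow> 'y pmf)
   \<Rightarrow> ('l \<Rightarrow> nat \<Rightarrow> 'a \<Rightarrow> 's \<Rightarrow> 'mv list \<Rightarrow> 'x)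
   \<Rightarrow> ('l \<Rightarrow> nat \<Rightarrow> nat \<Rightarrow> 'a \<Rightarrow> 's \<Rightarrow> 'mv list \<Rightarrow> 'mb)
   \<Rightarrow> ('l \<Rightarrow> nat \<Rightarrow> nat \<Rightarrow> 't \<Rightarrow> 'mb list \<Rightarrow> 'y list \<Rightarrow> 'mv)
   \<Rightarrow> (nat \<Rightarrow> nat) \<Rightarrow> ('l \<Rightarrow> 'a) \<Rightarrow> ('l \<Rightarrow> 's) \<Rightarrow> ('l \<Rightarrow> 't) \<Rightarrow> nat \<Rightarrow> 'y list pmf" where
  "channel_outputs W enc bid ver r a s t 0 = return_pmf []"
| "channel_outputs W enc bid ver r a s t (Suc i) =
     bind_pmf (channel_outputs W enc bid ver r a s t i) (\<lambda>ys.
       map_pmf (\<lambda>y. ys @ [y])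
         (W (\<lambda>l. enc l (Suc i) (a l) (s l)
                    (snd (snd (bidder_trace enc bid ver r l (a l) (s l) (t l) ys i))))))"

text \<open>Joint distribution of (A_L, S_L, S'_L, Y^n); messages and local randomness are mutually independent.\<close>
definition protocol_dist ::
  "(('l::finite \<Rightarrow> 'x) \<Rightarrow> 'y pmf) \<Rightarrow> ('l \<Rightarrow> 'a pmf) \<Rightarrow> ('l \<Rightarrow> 's pmf) \<Rightarrow> ('l \<Rightarrow> 't pmf)
   \<Rightarrow> ('l \<Rightarrow> nat \<Rightarrow> 'a \<Rightarrow> 's \<Rightarrow> 'mv list \<Rightarrow> 'x)
   \<Rightarrow> ('l \<Rightarrow> nat \<Rightarrow> nat \<Rightarrow> 'a \<Rightarrow> 's \<Rightarrow> 'mv list \<Rightarrow> 'mb)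
   \<Rightarrow> ('l \<Rightarrow> nat \<Rightarrow> nat \<Rightarrow> 't \<Rightarrow> 'mb list \<Rightarrow> 'y list \<Rightarrow> 'mv)
   \<Rightarrow> (nat \<Rightarrow> nat) \<Rightarrow> nat \<Rightarrow> (('l \<Rightarrow> 'a) \<times> ('l \<Rightarrow> 's) \<times> ('l \<Rightarrow> 't) \<times> 'y list) pmf" where
  "protocol_dist W PA PS PT enc bid ver r n =
     bind_pmf (Pi_pmf UNIV undefined PA) (\<lambda>a.
     bind_pmf (Pi_pmf UNIV undefined PS) (\<lambda>s.
     bind_pmf (Pi_pmf UNIV undefined PT) (\<lambda>t.
     map_pmf (\<lambda>ys. (a, s, t, ys)) (channel_outputs W enc bid ver r a s t n))))"

end

theory Submission
  imports Defs
begin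


lemma exch_app:
  "\<exists>xb xv. exch_rounds bid ver l i a s t ys k h = (fst h @ xb, snd h @ xv) \<and> length xb = k \<and> length xv = k"
proof (induction k)
  case 0 then show ?case by (cases h) auto
next
  case (Suc k)
  then obtain xb xv where e: "exch_rounds bid ver l i a s t ys k h = (fst h @ xb, snd h @ xv)"
     and "length xb = k" "length xv = k" by blast
  then show ?case by (auto simp: e Let_def intro!: exI[of _ "xb @ _"] exI[of _ "xv @ _"])
qed

lemma exch_rect:
  "exch_rounds bid ver l i a1 s1 t1 ys1 k h = h' \<Longrightarrow> exch_rounds bid ver l i a2 s2 t2 ys2 k h = h'
   \<Longrightarrow> exch_rounds bid ver l i a1 s1 t2 ys2 k h = h'"
proof (induction k arbitrary: h')
  case 0 then show ?case by simp
next
  case (Suc k)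
  obtain hb1 hv1 where e1: "exch_rounds bid ver l i a1 s1 t1 ys1 k h = (hb1, hv1)" by fastforce
  obtain hb2 hv2 where e2: "exch_rounds bid ver l i a2 s2 t2 ys2 k h = (hb2, hv2)" by fastforce
  from Suc.prems e1 e2 have eq: "hb1 = hb2" "hv1 = hv2" "bid l i (Suc k) a1 s1 hv1 = bid l i (Suc k) a2 s2 hv2"
    by (auto simp: Let_def)
  have "exch_rounds bid ver l i a1 s1 t2 ys2 k h = (hb1, hv1)"
    using Suc.IH[of "(hb1,hv1)"] e1 e2 eq by simp
  then show ?case using Suc.prems e1 e2 eq by (auto simp: Let_def)
qed

lemma trace_rect:
  "bidder_trace enc bid ver r l a1 s1 t1 ys1 n = v \<Longrightarrow> bidder_trace enc bid ver r l a2 s2 t2 ys2 n = v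
   \<Longrightarrow> bidder_trace enc bid ver r l a1 s1 t2 ys2 n = v"
proof (induction n arbitrary: v)
  case 0 then show ?case by simp
next
  case (Suc n)
  obtain xs1 hb1 hv1 where e1: "bidder_trace enc bid ver r l a1 s1 t1 ys1 n = (xs1, hb1, hv1)" by (cases "bidder_trace enc bid ver r l a1 s1 t1 ys1 n") auto
  obtain xs2 hb2 hv2 where e2: "bidder_trace enc bid ver r l a2 s2 t2 ys2 n = (xs2, hb2, hv2)" by (cases "bidder_trace enc bid ver r l a2 s2 t2 ys2 n") auto
  obtain xb1 xv1 where x1: "exch_rounds bid ver l (Suc n) a1 s1 t1 (take (Suc n) ys1) (r (Suc n)) (hb1, hv1) = (hb1 @ xb1, hv1 @ xv1)"
    "length xb1 = r (Suc n)" "length xv1 = r (Suc n)"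
    using exch_app[of bid ver l "Suc n" a1 s1 t1 "take (Suc n) ys1" "r (Suc n)" "(hb1,hv1)"] by auto
  obtain xb2 xv2 where x2: "exch_rounds bid ver l (Suc n) a2 s2 t2 (take (Suc n) ys2) (r (Suc n)) (hb2, hv2) = (hb2 @ xb2, hv2 @ xv2)"
    "length xb2 = r (Suc n)" "length xv2 = r (Suc n)"
    using exch_app[of bid ver l "Suc n" a2 s2 t2 "take (Suc n) ys2" "r (Suc n)" "(hb2,hv2)"] by auto
  from Suc.prems e1 e2 x1 x2 have eqs: "xs1 = xs2" "hb1 @ xb1 = hb2 @ xb2" "hv1 @ xv1 = hv2 @ xv2"
     "enc l (Suc n) a1 s1 hv1 = enc l (Suc n) a2 s2 hv2" by auto
  then have eq2: "hb1 = hb2" "hv1 = hv2" using x1(2,3) x2(2,3) by (auto simp: append_eq_append_conv)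
  have ih: "bidder_trace enc bid ver r l a1 s1 t2 ys2 n = (xs1, hb1, hv1)"
    using Suc.IH[of "(xs1, hb1, hv1)"] e1 e2 eqs eq2 by simp
  have ex: "exch_rounds bid ver l (Suc n) a1 s1 t2 (take (Suc n) ys2) (r (Suc n)) (hb1, hv1) = (hb2 @ xb2, hv2 @ xv2)"
    by (rule exch_rect[where ?t1.0=t1 and ?ys1.0="take (Suc n) ys1" and ?a2.0=a2 and ?s2.0=s2])
       (use x1 x2 eqs eq2 in auto)
  show ?case using Suc.prems ih ex e2 x2 eqs eq2 by auto
qed

lemma trace_xs_len: "length (fst (bidder_trace enc bid ver r l a s t ys n)) = n"
  by (induction n) (auto split: prod.splits)

lemma trace_xs_nth: "j < n \<Longrightarrow> fst (bidder_trace enc bid ver r l a s t ys n) ! j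
   = enc l (Suc j) a s (snd (snd (bidder_trace enc bid ver r l a s t ys j)))"
proof (induction n)
  case 0 then show ?case by simp
next
  case (Suc n)
  have L: "length (fst (bidder_trace enc bid ver r l a s t ys n)) = n" by (rule trace_xs_len)
  show ?case
  proof (cases "j = n")
    case True then show ?thesis using L by (auto split: prod.splits simp: nth_append)
  next
    case False then show ?thesis using L Suc by (auto split: prod.splits simp: nth_append)
  qed
qed

lemma trace_take: "bidder_trace enc bid ver r l a s t (take j ys) j = bidder_trace enc bid ver r l a s t ys j"
proof (induction j arbitrary: ys)
  case 0 then show ?case by simp
next
  case (Suc j)
  have "bidder_trace enc bid ver r l a s t (take (Suc j) ys) j = bidder_trace enc bid ver r l a s t ys j"
    using Suc.IH[of "take (Suc j) ys"] Suc.IH[of ys] by (simp add: min_def)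
  then show ?case by (simp split: prod.splits)
qed



lemma co_len: "ys \<in> set_pmf (channel_outputs W enc bid ver r a s t n) \<Longrightarrow> length ys = n"
  by (induction n arbitrary: ys) auto

lemma map_snoc_pmf:
  "pmf (map_pmf (\<lambda>y. ys @ [y]) M) zs = (if zs \<noteq> [] \<and> butlast zs = ys then pmf M (last zs) else 0)"
proof (cases "zs \<noteq> [] \<and> butlast zs = ys")
  case True
  then have zs: "zs = ys @ [last zs]" by (metis append_butlast_last_id)
  have "inj (\<lambda>y. ys @ [y])" by (auto intro: injI)
  then have "pmf (map_pmf (\<lambda>y. ys @ [y]) M) (ys @ [last zs]) = pmf M (last zs)" by (rule pmf_map_inj')
  then show ?thesis using True zs by metis
next
  case False
  have "(\<lambda>y. ys @ [y]) -` {zs} = {}" using False by auto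
  then have "pmf (map_pmf (\<lambda>y. ys @ [y]) M) zs = 0" by (simp add: pmf_map)
  then show ?thesis by (subst if_not_P[OF False])
qed

lemma co_form:
  "pmf (channel_outputs W enc bid ver r a s t n) zs = (if length zs = n then
     (\<Prod>j<n. pmf (W (\<lambda>k. enc k (Suc j) (a k) (s k)
        (snd (snd (bidder_trace enc bid ver r k (a k) (s k) (t k) (take j zs) j))))) (zs ! j)) else 0)"
proof (induction n arbitrary: zs)
  case 0 then show ?case by (simp add: pmf_return)
next
  case (Suc n)
  define X where "X ys = (\<lambda>k. enc k (Suc n) (a k) (s k)
        (snd (snd (bidder_trace enc bid ver r k (a k) (s k) (t k) ys n))))" for ys
  let ?CO = "channel_outputs W enc bid ver r a s t n"
  have "ennreal (pmf (channel_outputs W enc bid ver r a s t (Suc n)) zs)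
     = (\<integral>\<^sup>+ys. ennreal (pmf (map_pmf (\<lambda>y. ys @ [y]) (W (X ys))) zs) \<partial>?CO)"
    by (simp add: ennreal_pmf_bind X_def)
  also have "\<dots> = (\<integral>\<^sup>+ys. (if length zs = Suc n then ennreal (pmf (W (X (butlast zs))) (last zs)) * indicator {butlast zs} ys else 0) \<partial>?CO)"
  proof (intro nn_integral_cong_AE AE_pmfI)
    fix ys assume "ys \<in> set_pmf ?CO"
    then have "length ys = n" by (rule co_len)
    then show "ennreal (pmf (map_pmf (\<lambda>y. ys @ [y]) (W (X ys))) zs) = (if length zs = Suc n then ennreal (pmf (W (X (butlast zs))) (last zs)) * indicator {butlast zs} ys else 0)"
      by (auto simp: map_snoc_pmf)
  qed
  also have "\<dots> = (if length zs = Suc n then ennreal (pmf (W (X (butlast zs))) (last zs)) * ennreal (pmf ?CO (butlast zs)) else 0)"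
    by (simp add: nn_integral_cmult_indicator emeasure_pmf_single)
  finally have E: "ennreal (pmf (channel_outputs W enc bid ver r a s t (Suc n)) zs) = \<dots>" .
  show ?case
  proof (cases "length zs = Suc n")
    case False then show ?thesis using E by simp
  next
    case True
    then have ne: "zs \<noteq> []" by auto
    have p: "pmf (channel_outputs W enc bid ver r a s t (Suc n)) zs = pmf (W (X (butlast zs))) (last zs) * pmf ?CO (butlast zs)"
      using E True by (simp add: ennreal_mult[symmetric])
    have bz: "butlast zs = take n zs" using True by (simp add: butlast_conv_take)
    have lz: "last zs = zs ! n" using True ne by (simp add: last_conv_nth)
    have "pmf ?CO (butlast zs) = (\<Prod>j<n. pmf (W (\<lambda>k. enc k (Suc j) (a k) (s k)
        (snd (snd (bidder_trace enc bid ver r k (a k) (s k) (t k) (take j zs) j))))) (zs ! j))"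
      using Suc.IH[of "butlast zs"] True bz by (auto intro!: prod.cong simp: min_def)
    then show ?thesis using p True bz lz by (simp add: X_def mult.commute)
  qed
qed



lemma trace_snd_enc: "snd (bidder_trace enc bid ver r k a s t ys n) = snd (bidder_trace enc' bid ver r k a s t ys n)"
  by (induction n) (auto split: prod.splits)

lemma co_inv_a:
  assumes "\<And>j x x' h y y' h'. enc' l j x x' h = enc' l j y y' h'"
  shows "channel_outputs W enc' bid ver r (a(l:=c)) s t n = channel_outputs W enc' bid ver r a s t n"
proof (induction n)
  case 0 then show ?case by simp
next
  case (Suc n)
  have "\<And>ys. (\<lambda>k. enc' k (Suc n) ((a(l:=c)) k) (s k)
                    (snd (snd (bidder_trace enc' bid ver r k ((a(l:=c)) k) (s k) (t k) ys n))))
         = (\<lambda>k. enc' k (Suc n) (a k) (s k)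
                    (snd (snd (bidder_trace enc' bid ver r k (a k) (s k) (t k) ys n))))"
    using assms by (auto simp: fun_eq_iff)
  then show ?case using Suc by simp
qed

lemma co_inv_s:
  assumes "\<And>j x x' h y y' h'. enc' l j x x' h = enc' l j y y' h'"
  shows "channel_outputs W enc' bid ver r a (s(l:=c)) t n = channel_outputs W enc' bid ver r a s t n"
proof (induction n)
  case 0 then show ?case by simp
next
  case (Suc n)
  have "\<And>ys. (\<lambda>k. enc' k (Suc n) (a k) ((s(l:=c)) k)
                    (snd (snd (bidder_trace enc' bid ver r k (a k) ((s(l:=c)) k) (t k) ys n))))
         = (\<lambda>k. enc' k (Suc n) (a k) (s k)
                    (snd (snd (bidder_trace enc' bid ver r k (a k) (s k) (t k) ys n))))"
    using assms by (auto simp: fun_eq_iff)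
  then show ?case using Suc by simp
qed

lemma co_chg:
  assumes T: "bidder_trace enc bid ver r l (a l) (s l) (t l) ys n = vv"
  shows "pmf (channel_outputs W enc bid ver r a s t n) ys
       = pmf (channel_outputs W (\<lambda>k j x x' h. if k = l then fst vv ! (j - 1) else enc k j x x' h) bid ver r a s t n) ys"
proof -
  let ?e = "\<lambda>k j x x' h. if k = l then fst vv ! (j - 1) else enc k j x x' h"
  have "\<And>j. j < n \<Longrightarrow> (\<lambda>k. enc k (Suc j) (a k) (s k)
        (snd (snd (bidder_trace enc bid ver r k (a k) (s k) (t k) (take j ys) j))))
     = (\<lambda>k. ?e k (Suc j) (a k) (s k)
        (snd (snd (bidder_trace ?e bid ver r k (a k) (s k) (t k) (take j ys) j))))"
  proof (rule ext)
    fix j k assume j: "j < n"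
    show "enc k (Suc j) (a k) (s k)
        (snd (snd (bidder_trace enc bid ver r k (a k) (s k) (t k) (take j ys) j)))
      = ?e k (Suc j) (a k) (s k)
        (snd (snd (bidder_trace ?e bid ver r k (a k) (s k) (t k) (take j ys) j)))"
    proof (cases "k = l")
      case True
      then show ?thesis using trace_xs_nth[OF j, of enc bid ver r l "a l" "s l" "t l" ys] T
        by (simp add: trace_take)
    next
      case False
      then show ?thesis using trace_snd_enc[of enc bid ver r k "a k" "s k" "t k" "take j ys" j ?e] by simp
    qed
  qed
  note eq = this
  show ?thesis unfolding co_form[of W enc] co_form[of W ?e]
    by (rule if_cong[OF refl _ refl], rule prod.cong[OF refl], subst eq) auto
qed

lemma pi_factor:
  fixes P :: "'l::finite \<Rightarrow> 'b pmf" and g :: "'b \<Rightarrow> ennreal"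
  assumes inv: "\<And>f c. \<phi> (f(l:=c)) = \<phi> f"
  shows "(\<integral>\<^sup>+f. g (f l) * \<phi> f \<partial>Pi_pmf UNIV d P) = (\<integral>\<^sup>+x. g x \<partial>P l) * (\<integral>\<^sup>+f. \<phi> f \<partial>Pi_pmf UNIV d P)"
proof -
  have U: "Pi_pmf UNIV d P = map_pmf (\<lambda>(y,f). f(l:=y)) (pair_pmf (P l) (Pi_pmf (UNIV - {l}) d P))"
    using Pi_pmf_insert[of "UNIV - {l}" l d P] by (simp add: insert_absorb)
  have "(\<integral>\<^sup>+f. g (f l) * \<phi> f \<partial>Pi_pmf UNIV d P) = (\<integral>\<^sup>+y. \<integral>\<^sup>+f. g y * \<phi> f \<partial>Pi_pmf (UNIV - {l}) d P \<partial>P l)"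
    by (simp add: U nn_integral_pair_pmf' inv)
  also have "\<dots> = (\<integral>\<^sup>+y. g y * (\<integral>\<^sup>+f. \<phi> f \<partial>Pi_pmf (UNIV - {l}) d P) \<partial>P l)"
    by (simp add: nn_integral_cmult)
  also have "\<dots> = (\<integral>\<^sup>+x. g x \<partial>P l) * (\<integral>\<^sup>+f. \<phi> f \<partial>Pi_pmf (UNIV - {l}) d P)"
    by (simp add: nn_integral_multc)
  also have "(\<integral>\<^sup>+f. \<phi> f \<partial>Pi_pmf (UNIV - {l}) d P) = (\<integral>\<^sup>+f. \<phi> f \<partial>Pi_pmf UNIV d P)"
    by (simp add: U nn_integral_pair_pmf' inv measure_pmf.emeasure_space_1)
  finally show ?thesis .
qed



lemma markov_from_factor:
  fixes p :: "('u \<times> 'v \<times> 'z) pmf"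
  assumes fac: "\<And>v. \<exists>\<alpha> \<gamma>. \<forall>g1 g3. (\<integral>\<^sup>+w. g1 (fst w) * indicator {v} (fst (snd w)) * g3 (snd (snd w)) \<partial>p) = \<alpha> g1 * \<gamma> g3"
  shows "markov_chain p"
  unfolding markov_chain_def
proof (intro allI)
  fix x y z
  obtain \<alpha> \<gamma> where ag: "\<And>g1 g3. (\<integral>\<^sup>+w. g1 (fst w) * indicator {y} (fst (snd w)) * g3 (snd (snd w)) \<partial>p) = \<alpha> g1 * \<gamma> g3"
    using fac[of y] by blast
  let ?one = "\<lambda>_. 1 :: ennreal"
  have J: "ennreal (pmf p (x, y, z)) = \<alpha> (indicator {x}) * \<gamma> (indicator {z})"
  proof -
    have "ennreal (pmf p (x, y, z)) = (\<integral>\<^sup>+w. indicator {(x,y,z)} w \<partial>p)"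
      by (simp add: emeasure_pmf_single)
    also have "\<dots> = (\<integral>\<^sup>+w. indicator {x} (fst w) * indicator {y} (fst (snd w)) * indicator {z} (snd (snd w)) \<partial>p)"
      by (intro nn_integral_cong) (auto split: split_indicator)
    finally show ?thesis using ag[of "indicator {x}" "indicator {z}"] by simp
  qed
  have M2: "ennreal (pmf (map_pmf (\<lambda>(x, y, z). y) p) y) = \<alpha> ?one * \<gamma> ?one"
  proof -
    have "ennreal (pmf (map_pmf (\<lambda>(x, y, z). y) p) y) = (\<integral>\<^sup>+w. indicator ((\<lambda>(x, y, z). y) -` {y}) w \<partial>p)"
      by (rule ennreal_pmf_map)
    also have "\<dots> = (\<integral>\<^sup>+w. ?one (fst w) * indicator {y} (fst (snd w)) * ?one (snd (snd w)) \<partial>p)"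
      by (intro nn_integral_cong) (auto split: split_indicator)
    finally show ?thesis using ag[of ?one ?one] by simp
  qed
  have M12: "ennreal (pmf (map_pmf (\<lambda>(x, y, z). (x, y)) p) (x, y)) = \<alpha> (indicator {x}) * \<gamma> ?one"
  proof -
    have "ennreal (pmf (map_pmf (\<lambda>(x, y, z). (x, y)) p) (x, y)) = (\<integral>\<^sup>+w. indicator ((\<lambda>(x, y, z). (x, y)) -` {(x, y)}) w \<partial>p)"
      by (rule ennreal_pmf_map)
    also have "\<dots> = (\<integral>\<^sup>+w. indicator {x} (fst w) * indicator {y} (fst (snd w)) * ?one (snd (snd w)) \<partial>p)"
      by (intro nn_integral_cong) (auto split: split_indicator)
    finally show ?thesis using ag[of "indicator {x}" ?one] by simp
  qed
  have M23: "ennreal (pmf (map_pmf (\<lambda>(x, y, z). (y, z)) p) (y, z)) = \<alpha> ?one * \<gamma> (indicator {z})"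
  proof -
    have "ennreal (pmf (map_pmf (\<lambda>(x, y, z). (y, z)) p) (y, z)) = (\<integral>\<^sup>+w. indicator ((\<lambda>(x, y, z). (y, z)) -` {(y, z)}) w \<partial>p)"
      by (rule ennreal_pmf_map)
    also have "\<dots> = (\<integral>\<^sup>+w. ?one (fst w) * indicator {y} (fst (snd w)) * indicator {z} (snd (snd w)) \<partial>p)"
      by (intro nn_integral_cong) (auto split: split_indicator)
    finally show ?thesis using ag[of ?one "indicator {z}"] by simp
  qed
  have "ennreal (pmf p (x, y, z) * pmf (map_pmf (\<lambda>(x, y, z). y) p) y)
      = ennreal (pmf (map_pmf (\<lambda>(x, y, z). (x, y)) p) (x, y) * pmf (map_pmf (\<lambda>(x, y, z). (y, z)) p) (y, z))"
    unfolding ennreal_mult[OF pmf_nonneg pmf_nonneg] J M2 M12 M23 by (simp add: ac_simps)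
  then show "pmf p (x, y, z) * pmf (map_pmf (\<lambda>(x, y, z). y) p) y =
       pmf (map_pmf (\<lambda>(x, y, z). (x, y)) p) (x, y) * pmf (map_pmf (\<lambda>(x, y, z). (y, z)) p) (y, z)"
    by (simp add: ennreal_inj)
qed



theorem lemma5:
  fixes W :: "('l::finite \<Rightarrow> 'x::finite) \<Rightarrow> 'y::finite pmf"
    and PA :: "'l \<Rightarrow> 'a pmf" and PS :: "'l \<Rightarrow> 's pmf" and PT :: "'l \<Rightarrow> 't pmf"
    and enc :: "'l \<Rightarrow> nat \<Rightarrow> 'a \<Rightarrow> 's \<Rightarrow> 'mv list \<Rightarrow> 'x"
    and bid :: "'l \<Rightarrow> nat \<Rightarrow> nat \<Rightarrow> 'a \<Rightarrow> 's \<Rightarrow> 'mv list \<Rightarrow> 'mb"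
    and ver :: "'l \<Rightarrow> nat \<Rightarrow> nat \<Rightarrow> 't \<Rightarrow> 'mb list \<Rightarrow> 'y list \<Rightarrow> 'mv"
    and r :: "nat \<Rightarrow> nat" and n :: nat and l :: 'l
  shows "markov_chain
           (map_pmf (\<lambda>(a, s, t, ys).
                       case bidder_trace enc bid ver r l (a l) (s l) (t l) ys n of (xs, hb, hv) \<Rightarrow>
                         ((a l, s l), ((hb, hv), xs), (ys, t l)))
              (protocol_dist W PA PS PT enc bid ver r n))"
proof (rule markov_from_factor)
  fix m :: "('mb list \<times> 'mv list) \<times> 'x list"
  obtain hb hv xs where m: "m = ((hb, hv), xs)" by (cases m) auto
  define vv where "vv = (xs, hb, hv)"
  define T where "T x x' tt ys = bidder_trace enc bid ver r l x x' tt ys n" for x x' tt ys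
  define Bi :: "'a \<Rightarrow> 's \<Rightarrow> ennreal" where "Bi x x' = (if \<exists>tt ys. T x x' tt ys = vv then 1 else 0)" for x x'
  define Vi :: "'t \<Rightarrow> 'y list \<Rightarrow> ennreal" where "Vi tt ys = (if \<exists>x x'. T x x' tt ys = vv then 1 else 0)" for tt ys
  have rect: "(if T x x' tt ys = vv then 1 else 0) = Bi x x' * Vi tt ys" for x x' tt ys
    unfolding Bi_def Vi_def T_def using trace_rect by fastforce
  define enc' where "enc' = (\<lambda>k j x x' h. if k = l then fst vv ! (j - 1) else enc k j x x' h)"
  have enc'_l: "\<And>j x x' h y y' h'. enc' l j x x' h = enc' l j y y' h'" by (simp add: enc'_def)
  define CO' where "CO' a s t = channel_outputs W enc' bid ver r a s t n" for a s t
  define PiA where "PiA = Pi_pmf UNIV undefined PA"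
  define PiS where "PiS = Pi_pmf UNIV undefined PS"
  define PiT where "PiT = Pi_pmf UNIV undefined PT"
  define \<alpha> where "\<alpha> g1 = (\<integral>\<^sup>+x. \<integral>\<^sup>+x'. g1 (x, x') * Bi x x' \<partial>PS l \<partial>PA l)" for g1 :: "'a \<times> 's \<Rightarrow> ennreal"
  define k where "k g3 a s t = (\<integral>\<^sup>+ys. Vi (t l) ys * g3 (ys, t l) \<partial>CO' a s t)" for g3 :: "'y list \<times> 't \<Rightarrow> ennreal" and a s t
  define \<gamma> where "\<gamma> g3 = (\<integral>\<^sup>+a. \<integral>\<^sup>+s. \<integral>\<^sup>+t. k g3 a s t \<partial>PiT \<partial>PiS \<partial>PiA)" for g3
  show "\<exists>\<alpha> \<gamma>. \<forall>g1 g3. (\<integral>\<^sup>+w. g1 (fst w) * indicator {m} (fst (snd w)) * g3 (snd (snd w))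
           \<partial>map_pmf (\<lambda>(a, s, t, ys).
                       case bidder_trace enc bid ver r l (a l) (s l) (t l) ys n of (xs, hb, hv) \<Rightarrow>
                         ((a l, s l), ((hb, hv), xs), (ys, t l)))
              (protocol_dist W PA PS PT enc bid ver r n)) = \<alpha> g1 * \<gamma> g3"
  proof (intro exI allI)
    fix g1 :: "'a \<times> 's \<Rightarrow> ennreal" and g3 :: "'y list \<times> 't \<Rightarrow> ennreal"
    have pw: "g1 (fst w) * indicator {m} (fst (snd w)) * g3 (snd (snd w)) =
              g1 (a l, s l) * (if T (a l) (s l) (t l) ys = vv then 1 else 0) * g3 (ys, t l)"
      if "w = (case bidder_trace enc bid ver r l (a l) (s l) (t l) ys n of (xs, hb, hv) \<Rightarrow>
                         ((a l, s l), ((hb, hv), xs), (ys, t l)))" for w a s t ys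
      using that unfolding T_def m vv_def
      by (cases "bidder_trace enc bid ver r l (a l) (s l) (t l) ys n") (auto split: split_indicator)
    have inner: "(\<integral>\<^sup>+ys. g1 (a l, s l) * (if T (a l) (s l) (t l) ys = vv then 1 else 0) * g3 (ys, t l)
                   \<partial>channel_outputs W enc bid ver r a s t n)
        = g1 (a l, s l) * Bi (a l) (s l) * k g3 a s t" for a s t
    proof -
      have "(\<integral>\<^sup>+ys. g1 (a l, s l) * (if T (a l) (s l) (t l) ys = vv then 1 else 0) * g3 (ys, t l)
                   \<partial>channel_outputs W enc bid ver r a s t n)
          = (\<integral>\<^sup>+ys. g1 (a l, s l) * (if T (a l) (s l) (t l) ys = vv then 1 else 0) * g3 (ys, t l) \<partial>CO' a s t)"
        unfolding nn_integral_measure_pmf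
      proof (intro nn_integral_cong)
        fix ys
        show "ennreal (pmf (channel_outputs W enc bid ver r a s t n) ys) *
          (g1 (a l, s l) * (if T (a l) (s l) (t l) ys = vv then 1 else 0) * g3 (ys, t l)) =
          ennreal (pmf (CO' a s t) ys) *
          (g1 (a l, s l) * (if T (a l) (s l) (t l) ys = vv then 1 else 0) * g3 (ys, t l))"
        proof (cases "T (a l) (s l) (t l) ys = vv")
          case True
          then have "pmf (channel_outputs W enc bid ver r a s t n) ys = pmf (CO' a s t) ys"
            unfolding CO'_def enc'_def T_def using co_chg[of enc bid ver r l a s t ys n vv W]
            by simp
          then show ?thesis by simp
        qed simp
      qed
      also have "\<dots> = (\<integral>\<^sup>+ys. (g1 (a l, s l) * Bi (a l) (s l)) * (Vi (t l) ys * g3 (ys, t l)) \<partial>CO' a s t)"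
        by (intro nn_integral_cong) (simp add: rect ac_simps)
      also have "\<dots> = g1 (a l, s l) * Bi (a l) (s l) * k g3 a s t"
        unfolding k_def by (rule nn_integral_cmult) simp
      finally show ?thesis .
    qed
    have kinv_a: "k g3 (a(l:=c)) s t = k g3 a s t" for a s t c
      unfolding k_def CO'_def by (subst co_inv_a[where enc'=enc' and l=l, OF enc'_l]) (rule refl)
    have kinv_s: "k g3 a (s(l:=c)) t = k g3 a s t" for a s t c
      unfolding k_def CO'_def by (subst co_inv_s[where enc'=enc' and l=l, OF enc'_l]) (rule refl)
    have "(\<integral>\<^sup>+w. g1 (fst w) * indicator {m} (fst (snd w)) * g3 (snd (snd w))
           \<partial>map_pmf (\<lambda>(a, s, t, ys).
                       case bidder_trace enc bid ver r l (a l) (s l) (t l) ys n of (xs, hb, hv) \<Rightarrow>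
                         ((a l, s l), ((hb, hv), xs), (ys, t l)))
              (protocol_dist W PA PS PT enc bid ver r n))
       = (\<integral>\<^sup>+a. \<integral>\<^sup>+s. \<integral>\<^sup>+t. \<integral>\<^sup>+ys. g1 (a l, s l) * (if T (a l) (s l) (t l) ys = vv then 1 else 0) * g3 (ys, t l)
                   \<partial>channel_outputs W enc bid ver r a s t n \<partial>PiT \<partial>PiS \<partial>PiA)"
      unfolding protocol_dist_def PiA_def PiS_def PiT_def
      by (simp add: pw)
    also have "\<dots> = (\<integral>\<^sup>+a. \<integral>\<^sup>+s. (g1 (a l, s l) * Bi (a l) (s l)) * (\<integral>\<^sup>+t. k g3 a s t \<partial>PiT) \<partial>PiS \<partial>PiA)"
      by (simp add: inner nn_integral_cmult)
    also have "\<dots> = (\<integral>\<^sup>+a. (\<integral>\<^sup>+x'. g1 (a l, x') * Bi (a l) x' \<partial>PS l) * (\<integral>\<^sup>+s. \<integral>\<^sup>+t. k g3 a s t \<partial>PiT \<partial>PiS) \<partial>PiA)"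
      unfolding PiS_def
      by (intro nn_integral_cong pi_factor[where g = "\<lambda>x'. g1 (_, x') * Bi _ x'"]) (simp add: kinv_s)
    also have "\<dots> = \<alpha> g1 * \<gamma> g3"
      unfolding PiA_def \<alpha>_def \<gamma>_def
      by (rule pi_factor[where g = "\<lambda>x. \<integral>\<^sup>+x'. g1 (x, x') * Bi x x' \<partial>PS l"]) (simp add: kinv_a)
    finally show "(\<integral>\<^sup>+w. g1 (fst w) * indicator {m} (fst (snd w)) * g3 (snd (snd w))
           \<partial>map_pmf (\<lambda>(a, s, t, ys).
                       case bidder_trace enc bid ver r l (a l) (s l) (t l) ys n of (xs, hb, hv) \<Rightarrow>
                         ((a l, s l), ((hb, hv), xs), (ys, t l)))
              (protocol_dist W PA PS PT enc bid ver r n)) = \<alpha> g1 * \<gamma> g3" .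
  qed
qed


end
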